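(* Fix $t>0$. For finite sets $X,Y\subset\mathbb{R}^D$, the magnitude distance $d^t_{Mag}(X,Y)=2\,\mathrm{Mag}(t(X\cup Y))-\mathrm{Mag}(tX)-\mathrm{Mag}(tY)$ satisfies: (i) Symmetry: $d^t_{Mag}(X,Y)=d^t_{Mag}(Y,X)$. (ii) Non-negativity: $d^t_{Mag}(X,Y)\ge 0$. (iii) Identity of indiscernibles: $d^t_{Mag}(X,Y)=0$ if and only if $X$ and $Y$ are magnitude-equivalent at scale $t$. (iv) No triangle inequality: for $D>1$, $d^t_{Mag}$ does not satisfy the triangle inequality on finite subsets of $\mathbb{R}^D$.
   Context: For a finite set $A\subset\mathbb{R}^D$ and $t>0$, $tA$ denotes $A$ with the metric $t\|x-y\|$. Its similarity matrix $\zeta_{tA}(x,y)=\exp(-t\|x-y\|)$ ($x,y\in A$) is invertible; the weighting $\mathbf{w}^t_A=\zeta_{tA}^{-1}\mathbb{1}$ is the unique vector with $\sum_{y\in A}\zeta_{tA}(x,y)\mathbf{w}^t_A(y)=1$ for all $x\in A$, and the magnitude is $\mathrm{Mag}(tA)=\sum_{x\in A}\mathbf{w}^t_A(x)$ (with $\mathrm{Mag}(t\emptyset)=0$). Two finite sets $X,Y\subset\mathbb{R}^D$ are magnitude-equivalent at scale $t$ if $\{x\in X:\mathbf{w}^t_X(x)\neq 0\}=\{y\in Y:\mathbf{w}^t_Y(y)\neq0\}$. *)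

theory Defs
  imports "HOL-Analysis.Analysis"
begin

text \<open>Similarity kernel of the scaled space tA: zeta(x,y) = exp(-t * norm(x - y)).\<close>
definition zeta :: "real \<Rightarrow> 'a::euclidean_space \<Rightarrow> 'a \<Rightarrow> real" where
  "zeta t x y = exp (- t * norm (x - y))"

definition weighting :: "real \<Rightarrow> 'a::euclidean_space set \<Rightarrow> 'a \<Rightarrow> real" where
  "weighting t A = (THE w. (\<forall>x. x \<notin> A \<longrightarrow> w x = 0) \<and>
                           (\<forall>x\<in>A. (\<Sum>y\<in>A. zeta t x y * w y) = 1))"

definition magnitude :: "real \<Rightarrow> 'a::euclidean_space set \<Rightarrow> real" where
  "magnitude t A = (\<Sum>x\<in>A. weighting t A x)"

definition mag_equivalent :: "real \<Rightarrow> 'a::euclidean_space set \<Rightarrow> 'a set \<Rightarrow> bool" where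
  "mag_equivalent t X Y \<longleftrightarrow>
     {x\<in>X. weighting t X x \<noteq> 0} = {y\<in>Y. weighting t Y y \<noteq> 0}"

definition mag_dist :: "real \<Rightarrow> 'a::euclidean_space set \<Rightarrow> 'a set \<Rightarrow> real" where
  "mag_dist t X Y = 2 * magnitude t (X \<union> Y) - magnitude t X - magnitude t Y"

end

theory Submission
  imports Defs "HOL-Computational_Algebra.Polynomial" "HOL-Probability.Distributions"
begin


lemma Pn_bound:
  fixes A :: "'a::euclidean_space set"
  assumes "finite A"
  shows "(v \<bullet> v) ^ n * (\<Sum>x\<in>A. \<Sum>y\<in>A. b x * b y * (x \<bullet> y) ^ n)
           \<ge> (\<Sum>x\<in>A. b x * (x \<bullet> v) ^ n)\<^sup>2"
proof (induction n arbitrary: b)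
  case 0
  then show ?case by (simp add: power2_eq_square sum_product)
next
  case (Suc n)
  define w where "w = (\<Sum>x\<in>A. (b x * (x \<bullet> v) ^ n) *\<^sub>R x)"
  have split: "(\<Sum>x\<in>A. \<Sum>y\<in>A. b x * b y * (x \<bullet> y) ^ Suc n) =
     (\<Sum>k\<in>Basis. \<Sum>x\<in>A. \<Sum>y\<in>A. (b x * (x \<bullet> k)) * (b y * (y \<bullet> k)) * (x \<bullet> y) ^ n)"
  proof -
    have "(\<Sum>x\<in>A. \<Sum>y\<in>A. b x * b y * (x \<bullet> y) ^ Suc n) =
       (\<Sum>x\<in>A. \<Sum>y\<in>A. \<Sum>k\<in>Basis. (b x * (x \<bullet> k)) * (b y * (y \<bullet> k)) * (x \<bullet> y) ^ n)"
    proof (intro sum.cong refl)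
      fix x y
      have "b x * b y * (x \<bullet> y) ^ Suc n = b x * b y * (x \<bullet> y) ^ n * (x \<bullet> y)" by simp
      also have "\<dots> = b x * b y * (x \<bullet> y) ^ n * (\<Sum>k\<in>Basis. (x \<bullet> k) * (y \<bullet> k))"
        by (subst euclidean_inner) simp
      also have "\<dots> = (\<Sum>k\<in>Basis. (b x * (x \<bullet> k)) * (b y * (y \<bullet> k)) * (x \<bullet> y) ^ n)"
        by (simp add: sum_distrib_left mult_ac)
      finally show "b x * b y * (x \<bullet> y) ^ Suc n = (\<Sum>k\<in>Basis. (b x * (x \<bullet> k)) * (b y * (y \<bullet> k)) * (x \<bullet> y) ^ n)" .
    qed
    also have "\<dots> = (\<Sum>k\<in>Basis. \<Sum>x\<in>A. \<Sum>y\<in>A. (b x * (x \<bullet> k)) * (b y * (y \<bullet> k)) * (x \<bullet> y) ^ n)"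
      by (simp add: sum.swap[of _ Basis] sum.swap[of _ Basis A])
    finally show ?thesis .
  qed
  have wk: "w \<bullet> k = (\<Sum>x\<in>A. b x * (x \<bullet> k) * (x \<bullet> v) ^ n)" for k
    by (simp add: w_def inner_sum_left mult_ac)
  have e1: "(v \<bullet> v) ^ Suc n * (\<Sum>x\<in>A. \<Sum>y\<in>A. b x * b y * (x \<bullet> y) ^ Suc n)
     = (v \<bullet> v) * (\<Sum>k\<in>Basis. (v \<bullet> v) ^ n * (\<Sum>x\<in>A. \<Sum>y\<in>A. (b x * (x \<bullet> k)) * (b y * (y \<bullet> k)) * (x \<bullet> y) ^ n))"
    unfolding split by (simp only: sum_distrib_left[symmetric] power_Suc mult.assoc)
  have e2: "(v \<bullet> v) * (\<Sum>k\<in>Basis. (\<Sum>x\<in>A. (b x * (x \<bullet> k)) * (x \<bullet> v) ^ n)\<^sup>2) \<le> (v \<bullet> v) * (\<Sum>k\<in>Basis. (v \<bullet> v) ^ n * (\<Sum>x\<in>A. \<Sum>y\<in>A. (b x * (x \<bullet> k)) * (b y * (y \<bullet> k)) * (x \<bullet> y) ^ n))"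
    by (intro mult_left_mono sum_mono Suc.IH) simp
  have e3: "(\<Sum>k\<in>Basis. (\<Sum>x\<in>A. (b x * (x \<bullet> k)) * (x \<bullet> v) ^ n)\<^sup>2) = w \<bullet> w"
    by (subst euclidean_inner[of w w]) (simp add: wk power2_eq_square)
  have e4: "(v \<bullet> w)\<^sup>2 \<le> (v \<bullet> v) * (w \<bullet> w)"
    using Cauchy_Schwarz_ineq[of v w] by simp
  have e5: "v \<bullet> w = (\<Sum>x\<in>A. b x * (x \<bullet> v) ^ Suc n)"
    by (simp add: w_def inner_sum_right inner_commute mult_ac)
  show ?case using e2 e4 unfolding e1 e3 e5[symmetric] by linarith
qed

lemma vandermonde_zero:
  fixes a :: "'b \<Rightarrow> real"
  assumes "finite A" "inj_on a A" "\<And>n. (\<Sum>x\<in>A. b x * a x ^ n) = 0" "z \<in> A"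
  shows "b z = 0"
proof -
  define p where "p = (\<Prod>y\<in>A-{z}. [:- a y, 1:])"
  have pv: "poly p r = (\<Prod>y\<in>A-{z}. r - a y)" for r
    by (simp add: p_def poly_prod)
  have "(\<Sum>x\<in>A. b x * poly p (a x)) = (\<Sum>x\<in>A. \<Sum>i\<le>degree p. coeff p i * (b x * a x ^ i))"
    by (simp add: poly_altdef sum_distrib_left mult_ac)
  also have "\<dots> = (\<Sum>i\<le>degree p. coeff p i * (\<Sum>x\<in>A. b x * a x ^ i))"
    by (subst sum.swap) (simp add: sum_distrib_left)
  also have "\<dots> = 0" using assms(3) by simp
  finally have s0: "(\<Sum>x\<in>A. b x * poly p (a x)) = 0" .
  have "(\<Sum>x\<in>A. b x * poly p (a x)) = b z * poly p (a z)"
  proof (rule sum.remove[OF assms(1,4), THEN trans])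
    have "\<forall>x\<in>A-{z}. poly p (a x) = 0"
      unfolding pv using assms(1) by (auto intro!: prod_zero)
    then show "b z * poly p (a z) + (\<Sum>x\<in>A - {z}. b x * poly p (a x)) = b z * poly p (a z)" by simp
  qed
  moreover have "poly p (a z) \<noteq> 0"
    unfolding pv using assms(1,2,4) by (auto simp: prod_zero_iff inj_on_def)
  ultimately show ?thesis using s0 by simp
qed

lemma separating_direction:
  fixes W :: "'a::real_inner set"
  assumes "finite W" "0 \<notin> W"
  shows "\<exists>v. \<forall>w\<in>W. v \<bullet> w \<noteq> 0"
  using assms
proof (induction W rule: finite_induct)
  case empty
  then show ?case by simp
next
  case (insert w W)
  then obtain v where v: "\<forall>u\<in>W. v \<bullet> u \<noteq> 0" by auto
  have w0: "w \<noteq> 0" using insert by auto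
  show ?case
  proof (cases "v \<bullet> w = 0")
    case False
    then show ?thesis using v by auto
  next
    case True
    define B where "B = (\<lambda>u. - (v \<bullet> u) / (w \<bullet> u)) ` W"
    have "finite B" using insert by (simp add: B_def)
    then obtain e :: real where e: "e \<notin> B" "e \<noteq> 0"
      by (metis ex_new_if_finite finite_insert infinite_UNIV_char_0 insertI1 insertCI)
    have "\<forall>u\<in>insert w W. (v + e *\<^sub>R w) \<bullet> u \<noteq> 0"
    proof
      fix u assume u: "u \<in> insert w W"
      show "(v + e *\<^sub>R w) \<bullet> u \<noteq> 0"
      proof (cases "u = w")
        case True
        then show ?thesis using \<open>v \<bullet> w = 0\<close> e w0 by (simp add: inner_add_left)
      next
        case False
        then have uW: "u \<in> W" using u by auto
        show ?thesis
        proof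
          assume h: "(v + e *\<^sub>R w) \<bullet> u = 0"
          then have h2: "v \<bullet> u + e * (w \<bullet> u) = 0" by (simp add: inner_add_left)
          show False
          proof (cases "w \<bullet> u = 0")
            case True then show False using h2 v uW by simp
          next
            case False
            then have "e = - (v \<bullet> u) / (w \<bullet> u)" using h2 by (simp add: field_simps)
            then show False using e uW by (auto simp: B_def)
          qed
        qed
      qed
    qed
    then show ?thesis by blast
  qed
qed

lemma gauss_pd:
  fixes A :: "'a::euclidean_space set"
  assumes "finite A" "s > 0" "x0 \<in> A" "c x0 \<noteq> 0"
  shows "(\<Sum>x\<in>A. \<Sum>y\<in>A. c x * c y * exp (- s * (norm (x - y))\<^sup>2)) > 0"
proof -
  obtain k :: 'a where k: "k \<in> Basis" using nonempty_Basis by blast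
  obtain v where v: "\<forall>w\<in>insert k {x - y |x y. x \<in> A \<and> y \<in> A \<and> x \<noteq> y}. v \<bullet> w \<noteq> 0"
  proof -
    have "finite {x - y |x y. x \<in> A \<and> y \<in> A \<and> x \<noteq> y}"
    proof -
      have "{x - y |x y. x \<in> A \<and> y \<in> A \<and> x \<noteq> y} \<subseteq> (\<lambda>(x,y). x - y) ` (A \<times> A)" by auto
      then show ?thesis using assms(1) finite_subset by blast
    qed
    moreover have "0 \<notin> insert k {x - y |x y. x \<in> A \<and> y \<in> A \<and> x \<noteq> y}" using k by auto
    ultimately show ?thesis using separating_direction[of "insert k {x - y |x y. x \<in> A \<and> y \<in> A \<and> x \<noteq> y}"] that by blast
  qed
  have v0: "v \<noteq> 0" using v by auto
  have inj: "inj_on (\<lambda>x. x \<bullet> v) A"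
  proof (rule inj_onI)
    fix x y assume "x \<in> A" "y \<in> A" "x \<bullet> v = y \<bullet> v"
    then have "v \<bullet> (x - y) = 0" by (simp add: inner_diff_right inner_commute)
    then show "x = y" using v \<open>x \<in> A\<close> \<open>y \<in> A\<close> by blast
  qed
  define b where "b x = c x * exp (- s * (norm x)\<^sup>2)" for x
  define P where "P n = (\<Sum>x\<in>A. \<Sum>y\<in>A. b x * b y * (x \<bullet> y) ^ n)" for n
  define T where "T n = (2 * s) ^ n / fact n * P n" for n
  have kern: "c x * c y * exp (- s * (norm (x - y))\<^sup>2) = b x * b y * exp (2 * s * (x \<bullet> y))" for x y
  proof -
    have nd: "(norm (x - y))\<^sup>2 = (norm x)\<^sup>2 + (norm y)\<^sup>2 - 2 * (x \<bullet> y)"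
      by (simp add: power2_norm_eq_inner inner_diff inner_commute)
    have "- s * (norm (x - y))\<^sup>2 = (- s * (norm x)\<^sup>2) + (- s * (norm y)\<^sup>2) + 2 * s * (x \<bullet> y)"
      unfolding nd by (simp add: algebra_simps)
    then have "exp (- s * (norm (x - y))\<^sup>2) = exp (- s * (norm x)\<^sup>2) * exp (- s * (norm y)\<^sup>2) * exp (2 * s * (x \<bullet> y))"
      by (simp only: exp_add)
    then show ?thesis by (simp add: b_def mult_ac)
  qed
  have sums: "T sums (\<Sum>x\<in>A. \<Sum>y\<in>A. c x * c y * exp (- s * (norm (x - y))\<^sup>2))"
  proof -
    have "(\<lambda>n. \<Sum>x\<in>A. \<Sum>y\<in>A. b x * b y * ((2 * s * (x \<bullet> y)) ^ n /\<^sub>R fact n))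
            sums (\<Sum>x\<in>A. \<Sum>y\<in>A. b x * b y * exp (2 * s * (x \<bullet> y)))"
      by (intro sums_sum sums_mult exp_converges)
    moreover have "(\<lambda>n. \<Sum>x\<in>A. \<Sum>y\<in>A. b x * b y * ((2 * s * (x \<bullet> y)) ^ n /\<^sub>R fact n)) = T"
      by (rule ext) (simp add: T_def P_def sum_distrib_left power_mult_distrib divide_inverse mult_ac)
    ultimately show ?thesis unfolding kern by simp
  qed
  have vv: "v \<bullet> v > 0" using v0 by simp
  have Pnn: "P n \<ge> 0" for n
  proof -
    have "(v \<bullet> v) ^ n * P n \<ge> 0"
      unfolding P_def by (rule order_trans[OF zero_le_power2 Pn_bound[OF assms(1)]])
    then show ?thesis using vv zero_less_power[OF vv, of n] by (simp add: zero_le_mult_iff)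
  qed
  have Tnn: "T n \<ge> 0" for n
    unfolding T_def using Pnn assms(2) by simp
  have "\<exists>n. (\<Sum>x\<in>A. b x * (x \<bullet> v) ^ n) \<noteq> 0"
  proof (rule ccontr)
    assume "\<not> ?thesis"
    then have "b x0 = 0" using vandermonde_zero[OF assms(1) inj, of b, OF _ assms(3)] by auto
    then show False using assms(4) by (simp add: b_def)
  qed
  then obtain n where n: "(\<Sum>x\<in>A. b x * (x \<bullet> v) ^ n) \<noteq> 0" by blast
  have "(v \<bullet> v) ^ n * P n > 0"
  proof -
    have "(\<Sum>x\<in>A. b x * (x \<bullet> v) ^ n)\<^sup>2 > 0" using n by simp
    then show ?thesis unfolding P_def using Pn_bound[OF assms(1), where v=v and n=n and b=b] by linarith
  qed
  then have "P n > 0" using vv zero_less_power[OF vv, of n] by (simp add: zero_less_mult_iff)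
  then have "T n > 0" unfolding T_def using assms(2) by simp
  then have "0 < suminf T" using suminf_pos_iff[OF sums_summable[OF sums] Tnn] by blast
  then show ?thesis using sums_unique[OF sums] by simp
qed



lemma gauss_UNIV:
  "(\<lambda>w::real. exp (- w\<^sup>2)) absolutely_integrable_on UNIV \<and> integral UNIV (\<lambda>w::real. exp (- w\<^sup>2)) = sqrt pi"
proof -
  have nd: "normal_density 0 (1 / sqrt 2) x = exp (- x\<^sup>2) / sqrt pi" for x
    unfolding normal_density_def by (simp add: power_divide real_sqrt_mult)
  have eq: "(\<lambda>w::real. exp (- w\<^sup>2)) = (\<lambda>x. sqrt pi * normal_density 0 (1 / sqrt 2) x)"
    by (rule ext) (simp add: nd)
  have int: "integrable lborel (\<lambda>x. sqrt pi * normal_density 0 (1 / sqrt 2) x)"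
  proof -
    have h: "(0::real) < 1 / sqrt 2" by simp
    show ?thesis using integrable_normal_density[OF h, of 0] by simp
  qed
  have val: "integral\<^sup>L lborel (\<lambda>x. sqrt pi * normal_density 0 (1 / sqrt 2) x) = sqrt pi"
    by simp
  have hi: "((\<lambda>w::real. exp (- w\<^sup>2)) has_integral sqrt pi) UNIV"
    using has_integral_integral_lborel[OF int] unfolding val eq .
  show ?thesis
    using hi by (auto intro!: nonnegative_absolutely_integrable_1 simp: integrable_on_def integral_unique)
qed

lemma gauss_half:
  "((\<lambda>u::real. exp (- u\<^sup>2)) has_integral (sqrt pi / 2)) {0<..}"
proof -
  have int: "integrable lborel (\<lambda>x::real. indicator {0..} x *\<^sub>R exp (- x\<^sup>2))"
    and val: "integral\<^sup>L lborel (\<lambda>x::real. indicator {0..} x *\<^sub>R exp (- x\<^sup>2)) = sqrt pi / 2"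
    using gaussian_moment_0 unfolding has_bochner_integral_iff by auto
  have "((\<lambda>x::real. indicator {0..} x *\<^sub>R exp (- x\<^sup>2)) has_integral (sqrt pi / 2)) UNIV"
    using has_integral_integral_lborel[OF int] unfolding val .
  then have "((\<lambda>x::real. if x \<in> {0..} then exp (- x\<^sup>2) else 0) has_integral (sqrt pi / 2)) UNIV"
  proof -
    have "(\<lambda>x::real. indicator {0..} x *\<^sub>R exp (- x\<^sup>2)) = (\<lambda>x::real. if x \<in> {0..} then exp (- x\<^sup>2) else 0)"
      by (auto simp: indicator_def fun_eq_iff)
    then show ?thesis using \<open>((\<lambda>x::real. indicator {0..} x *\<^sub>R exp (- x\<^sup>2)) has_integral (sqrt pi / 2)) UNIV\<close> by simp
  qed
  then have h0: "((\<lambda>u::real. exp (- u\<^sup>2)) has_integral (sqrt pi / 2)) {0..}"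
    by (subst has_integral_restrict_UNIV[symmetric]) simp
  show ?thesis
  proof (subst has_integral_spike_set_eq[of "{0<..}" "{0..}"])
    show "negligible {x::real \<in> {0<..} - {0..}. exp (- x\<^sup>2) \<noteq> 0}" by (rule negligible_subset[of "{}"]) auto
    show "negligible {x::real \<in> {0..} - {0<..}. exp (- x\<^sup>2) \<noteq> 0}"
      by (rule negligible_subset[of "{0}"]) auto
  qed (use h0 in simp)
qed

lemma subord_core:
  fixes b :: real
  assumes b: "b > 0"
  shows "(\<lambda>u. exp (- (u - b / u)\<^sup>2)) absolutely_integrable_on {0<..} \<and>
         integral {0<..} (\<lambda>u. exp (- (u - b / u)\<^sup>2)) = sqrt pi / 2"
proof -
  define S :: "real set" where "S = {0<..}"
  define f :: "real \<Rightarrow> real" where "f w = exp (- w\<^sup>2)" for w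
  define g where "g u = u - b / u" for u
  define g' where "g' u = 1 + b / u\<^sup>2" for u
  define A where "A u = f (g u)" for u
  define B where "B u = b / u\<^sup>2 * f (g u)" for u
  have S: "S \<in> sets lebesgue" by (simp add: S_def)
  have der: "(g has_field_derivative g' x) (at x within S)" if "x \<in> S" for x
  proof -
    have "x \<noteq> 0" using that by (simp add: S_def)
    then show ?thesis unfolding g_def g'_def
      by (auto intro!: derivative_eq_intros simp: power2_eq_square field_simps)
  qed
  have inj: "inj_on g S"
  proof (rule inj_onI)
    fix x y assume xy: "x \<in> S" "y \<in> S" "g x = g y"
    then have x0: "x > 0" and y0: "y > 0" by (auto simp: S_def)
    have "(x - y) * (x * y + b) = x * y * (g x - g y)"
      using x0 y0 by (simp add: g_def field_simps)
    then have "(x - y) * (x * y + b) = 0" using xy by simp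
    moreover have "x * y + b > 0" using x0 y0 b by (simp add: add_pos_pos)
    ultimately show "x = y" by simp
  qed
  have img: "g ` S = UNIV"
  proof -
    have "w \<in> g ` S" for w
    proof -
      define u where "u = (w + sqrt (w\<^sup>2 + 4 * b)) / 2"
      have sq: "sqrt (w\<^sup>2 + 4 * b) > \<bar>w\<bar>"
        using b real_sqrt_less_iff[of "w\<^sup>2" "w\<^sup>2 + 4 * b"] by simp
      then have u0: "u > 0" by (simp add: u_def)
      have "(sqrt (w\<^sup>2 + 4 * b))\<^sup>2 = w\<^sup>2 + 4 * b" using b by simp
      then have "u * u - w * u - b = 0" unfolding u_def by (simp add: power2_eq_square field_simps)
      then have "g u = w" using u0 by (simp add: g_def field_simps)
      then show ?thesis using u0 by (auto simp: S_def)
    qed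
    then show ?thesis by auto
  qed
  have fint: "f absolutely_integrable_on UNIV" "integral UNIV f = sqrt pi"
    using gauss_UNIV unfolding f_def by auto
  have gpos: "g' u > 0" for u unfolding g'_def using b by (simp add: add_pos_nonneg)
  have s1: "(\<lambda>x. \<bar>g' x\<bar> * f (g x)) absolutely_integrable_on S \<and> integral S (\<lambda>x. \<bar>g' x\<bar> * f (g x)) = sqrt pi"
    using has_absolute_integral_change_of_variables_1'[OF S der inj, of f "sqrt pi"] img fint by simp
  have AB: "\<bar>g' x\<bar> * f (g x) = A x + B x" for x
    using gpos[of x] by (simp add: A_def B_def g'_def algebra_simps)
  have ABint: "(\<lambda>x. A x + B x) absolutely_integrable_on S" "integral S (\<lambda>x. A x + B x) = sqrt pi"
    using s1 unfolding AB by auto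
  have contA: "continuous_on S A"
    unfolding A_def f_def g_def S_def by (auto intro!: continuous_intros)
  have contB: "continuous_on S B"
    unfolding B_def f_def g_def S_def by (auto intro!: continuous_intros)
  have Bnn: "B x \<ge> 0" for x using b by (simp add: B_def f_def)
  have Ann: "A x \<ge> 0" for x by (simp add: A_def f_def)
  have Aint: "A absolutely_integrable_on S"
  proof (rule measurable_bounded_by_integrable_imp_absolutely_integrable)
    show "A \<in> borel_measurable (lebesgue_on S)" by (rule continuous_imp_measurable_on_sets_lebesgue[OF contA S])
    show "S \<in> sets lebesgue" by (rule S)
    show "(\<lambda>x. A x + B x) integrable_on S" using ABint(1) by (rule set_lebesgue_integral_eq_integral(1))
    show "norm (A x) \<le> A x + B x" if "x \<in> S" for x using Ann[of x] Bnn[of x] by simp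
  qed
  have Bint: "B absolutely_integrable_on S"
  proof (rule measurable_bounded_by_integrable_imp_absolutely_integrable)
    show "B \<in> borel_measurable (lebesgue_on S)" by (rule continuous_imp_measurable_on_sets_lebesgue[OF contB S])
    show "S \<in> sets lebesgue" by (rule S)
    show "(\<lambda>x. A x + B x) integrable_on S" using ABint(1) by (rule set_lebesgue_integral_eq_integral(1))
    show "norm (B x) \<le> A x + B x" if "x \<in> S" for x using Ann[of x] Bnn[of x] by simp
  qed
  define h where "h v = b / v" for v
  define h' where "h' v = - b / v\<^sup>2" for v
  have derh: "(h has_field_derivative h' x) (at x within S)" if "x \<in> S" for x
  proof -
    have "x \<noteq> 0" using that by (simp add: S_def)
    then show ?thesis unfolding h_def h'_def
      by (auto intro!: derivative_eq_intros simp: power2_eq_square field_simps)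
  qed
  have injh: "inj_on h S" using b by (auto simp: inj_on_def h_def S_def)
  have imgh: "h ` S = S"
  proof
    show "h ` S \<subseteq> S" using b by (auto simp: h_def S_def)
    show "S \<subseteq> h ` S"
    proof
      fix x assume "x \<in> S"
      then have "x > 0" by (simp add: S_def)
      then have "h (b / x) = x" "b / x \<in> S" using b by (auto simp: h_def S_def)
      then show "x \<in> h ` S" by (metis imageI)
    qed
  qed
  have hB: "\<bar>h' x\<bar> * A (h x) = B x" if "x \<in> S" for x
  proof -
    have x0: "x > 0" using that by (simp add: S_def)
    have "g (h x) = - g x" using x0 b by (simp add: g_def h_def field_simps)
    then have "A (h x) = A x" by (simp add: A_def f_def)
    moreover have "\<bar>h' x\<bar> = b / x\<^sup>2" using b by (simp add: h'_def)
    ultimately show ?thesis by (simp add: A_def B_def)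
  qed
  have s2: "(\<lambda>x. \<bar>h' x\<bar> * A (h x)) absolutely_integrable_on S \<and> integral S (\<lambda>x. \<bar>h' x\<bar> * A (h x)) = integral S A"
    using has_absolute_integral_change_of_variables_1'[OF S derh injh, of A "integral S A"] imgh Aint by simp
  have "integral S (\<lambda>x. \<bar>h' x\<bar> * A (h x)) = integral S B"
    by (rule integral_cong) (rule hB)
  then have IB: "integral S B = integral S A" using s2 by simp
  have "integral S (\<lambda>x. A x + B x) = integral S A + integral S B"
    by (rule integral_add) (use Aint Bint in \<open>auto intro: set_lebesgue_integral_eq_integral(1)\<close>)
  then have "integral S A = sqrt pi / 2" using ABint(2) IB by simp
  then show ?thesis using Aint unfolding A_def f_def g_def S_def by simp
qed



lemma laplace_repr:
  fixes r :: real
  assumes r: "r \<ge> 0"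
  shows "((\<lambda>u. exp (- u\<^sup>2) * exp (- r\<^sup>2 / u\<^sup>2)) has_integral (sqrt pi / 2 * exp (- 2 * r))) {0<..}"
proof (cases "r = 0")
  case True
  then show ?thesis using gauss_half by simp
next
  case False
  then have r0: "r > 0" using r by simp
  have eq: "exp (- u\<^sup>2) * exp (- r\<^sup>2 / u\<^sup>2) = exp (- 2 * r) * exp (- (u - r / u)\<^sup>2)" if "u \<in> {0<..}" for u
  proof -
    have u0: "u \<noteq> 0" using that by simp
    have e: "- 2 * r + - (u - r / u)\<^sup>2 = - u\<^sup>2 + - r\<^sup>2 / u\<^sup>2"
      using u0 by (simp add: power2_eq_square field_simps)
    have "exp (- 2 * r) * exp (- (u - r / u)\<^sup>2) = exp (- 2 * r + - (u - r / u)\<^sup>2)"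
      by (rule exp_add[symmetric])
    also have "\<dots> = exp (- u\<^sup>2 + - r\<^sup>2 / u\<^sup>2)" by (simp only: e)
    also have "\<dots> = exp (- u\<^sup>2) * exp (- r\<^sup>2 / u\<^sup>2)" by (rule exp_add)
    finally show ?thesis by simp
  qed
  have "((\<lambda>u. exp (- (u - r / u)\<^sup>2)) has_integral (sqrt pi / 2)) {0<..}"
    using subord_core[OF r0] by (auto intro: set_lebesgue_integral_eq_integral(1) simp: has_integral_iff)
  then have "((\<lambda>u. exp (- 2 * r) * exp (- (u - r / u)\<^sup>2)) has_integral (exp (- 2 * r) * (sqrt pi / 2))) {0<..}"
    by (rule has_integral_mult_right)
  then show ?thesis
    by (subst has_integral_cong[OF eq]) (simp_all add: mult_ac)
qed

lemma exp_kernel_pd: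
  fixes A :: "'a::euclidean_space set"
  assumes "finite A" "t > 0" "x0 \<in> A" "c x0 \<noteq> 0"
  shows "(\<Sum>x\<in>A. \<Sum>y\<in>A. c x * c y * exp (- t * norm (x - y))) > 0"
proof -
  define S :: "real set" where "S = {0<..}"
  define H :: "real \<Rightarrow> real" where "H u = (\<Sum>x\<in>A. \<Sum>y\<in>A. c x * c y * (exp (- u\<^sup>2) * exp (- (t * norm (x - y) / 2)\<^sup>2 / u\<^sup>2)))" for u
  have each: "((\<lambda>u. c x * c y * (exp (- u\<^sup>2) * exp (- (t * norm (x - y) / 2)\<^sup>2 / u\<^sup>2))) has_integral
      (c x * c y * (sqrt pi / 2 * exp (- t * norm (x - y))))) S" for x y
  proof -
    have "t * norm (x - y) / 2 \<ge> 0" using assms(2) by simp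
    from has_integral_mult_right[OF laplace_repr[OF this], of "c x * c y"]
    show ?thesis by (simp add: S_def)
  qed
  have HI: "(H has_integral (\<Sum>x\<in>A. \<Sum>y\<in>A. c x * c y * (sqrt pi / 2 * exp (- t * norm (x - y))))) S"
    unfolding H_def by (intro has_integral_sum assms(1) each)
  have Hpos: "H u > 0" if "u \<in> S" for u
  proof -
    have u0: "u \<noteq> 0" using that by (simp add: S_def)
    define s where "s = t\<^sup>2 / (4 * u\<^sup>2)"
    have s0: "s > 0" using u0 assms(2) by (simp add: s_def)
    have "H u = exp (- u\<^sup>2) * (\<Sum>x\<in>A. \<Sum>y\<in>A. c x * c y * exp (- s * (norm (x - y))\<^sup>2))"
      unfolding H_def sum_distrib_left
      by (intro sum.cong refl) (simp add: s_def power_mult_distrib power_divide mult_ac)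
    then show ?thesis using gauss_pd[where A=A and s=s and c=c, OF assms(1) s0 assms(3,4)] by simp
  qed
  have Hcont: "continuous_on S H"
    unfolding H_def S_def by (auto intro!: continuous_intros)
  have Hint: "H integrable_on S" using HI by blast
  have sub: "{1..2::real} \<subseteq> S" by (auto simp: S_def)
  obtain m where m: "m \<in> {1..2::real}" "\<forall>y\<in>{1..2::real}. H m \<le> H y"
    using continuous_attains_inf[of "{1..2::real}" H] continuous_on_subset[OF Hcont sub] by auto
  have "H m > 0" using Hpos m sub by auto
  have "integral {1..2::real} (\<lambda>u. H m) \<le> integral {1..2::real} H"
    by (rule integral_le) (use m continuous_on_subset[OF Hcont sub] in \<open>auto intro: integrable_continuous_interval\<close>)
  moreover have "integral {1..2::real} H \<le> integral S H"
    by (rule integral_subset_le[OF sub]) (use Hint sub Hpos in \<open>auto intro: integrable_on_subinterval less_imp_le\<close>)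
  ultimately have "integral S H > 0" using \<open>H m > 0\<close> by simp
  then have pos: "(\<Sum>x\<in>A. \<Sum>y\<in>A. c x * c y * (sqrt pi / 2 * exp (- t * norm (x - y)))) > 0"
    using integral_unique[OF HI] by simp
  have eqs: "(\<Sum>x\<in>A. \<Sum>y\<in>A. c x * c y * (sqrt pi / 2 * exp (- t * norm (x - y)))) =
      sqrt pi / 2 * (\<Sum>x\<in>A. \<Sum>y\<in>A. c x * c y * exp (- t * norm (x - y)))"
    by (simp add: sum_distrib_left mult_ac)
  have "0 < sqrt pi / 2 * (\<Sum>x\<in>A. \<Sum>y\<in>A. c x * c y * exp (- t * norm (x - y)))"
    using pos unfolding eqs .
  moreover have "sqrt pi / 2 > 0" by simp
  ultimately show ?thesis by (simp add: zero_less_mult_iff)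
qed



definition Qf :: "real \<Rightarrow> 'a::euclidean_space set \<Rightarrow> ('a \<Rightarrow> real) \<Rightarrow> real" where
  "Qf t A w = (\<Sum>x\<in>A. \<Sum>y\<in>A. w x * w y * zeta t x y)"

definition is_wt :: "real \<Rightarrow> 'a::euclidean_space set \<Rightarrow> ('a \<Rightarrow> real) \<Rightarrow> bool" where
  "is_wt t A w \<longleftrightarrow> (\<forall>x. x \<notin> A \<longrightarrow> w x = 0) \<and> (\<forall>x\<in>A. (\<Sum>y\<in>A. zeta t x y * w y) = 1)"

lemma zeta_sym: "zeta t x y = zeta t y x"
  by (simp add: zeta_def norm_minus_commute)

lemma zeta_self: "zeta t x x = 1"
  by (simp add: zeta_def)

lemma Qf_pos:
  assumes "finite A" "t > 0" "x0 \<in> A" "w x0 \<noteq> 0"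
  shows "Qf t A w > 0"
  using exp_kernel_pd[where A=A and c=w, OF assms(1,2,3,4)] by (simp add: Qf_def zeta_def)

lemma Qf_nonneg:
  assumes "finite A" "t > 0"
  shows "Qf t A w \<ge> 0"
proof (cases "\<exists>x\<in>A. w x \<noteq> 0")
  case True
  then show ?thesis using Qf_pos[OF assms] by (meson less_imp_le)
next
  case False
  then show ?thesis by (simp add: Qf_def)
qed

lemma Qf_zero:
  assumes "finite A" "t > 0" "Qf t A w = 0" "x \<in> A"
  shows "w x = 0"
  using Qf_pos[OF assms(1,2,4), of w] assms(3) by auto

lemma solve_system:
  fixes A :: "'a::euclidean_space set"
  assumes "finite A" "t > 0"
  shows "\<exists>w. (\<forall>x. x \<notin> A \<longrightarrow> w x = 0) \<and> (\<forall>x\<in>A. (\<Sum>y\<in>A. zeta t x y * w y) = r x)"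
  using assms(1)
proof (induction A arbitrary: r rule: finite_induct)
  case empty
  then show ?case by (rule exI[of _ "\<lambda>_. 0"]) simp
next
  case (insert z A)
  obtain u where u0: "\<forall>x. x \<notin> A \<longrightarrow> u x = 0" and u1: "\<forall>x\<in>A. (\<Sum>y\<in>A. zeta t x y * u y) = zeta t x z"
    using insert.IH[of "\<lambda>x. zeta t x z"] by blast
  obtain p where p0: "\<forall>x. x \<notin> A \<longrightarrow> p x = 0" and p1: "\<forall>x\<in>A. (\<Sum>y\<in>A. zeta t x y * p y) = r x"
    using insert.IH[of r] by blast
  define \<delta> where "\<delta> = zeta t z z - (\<Sum>y\<in>A. zeta t z y * u y)"
  define e where "e x = (if x = z then 1 else - u x)" for x
  have eA: "e x = - u x" if "x \<in> A" for x using that insert.hyps(2) by (auto simp: e_def)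
  have "Qf t (insert z A) e = \<delta>"
  proof -
    have "Qf t (insert z A) e = (\<Sum>x\<in>insert z A. e x * (\<Sum>y\<in>insert z A. e y * zeta t x y))"
      by (simp add: Qf_def sum_distrib_left mult_ac)
    also have "\<dots> = e z * (e z * zeta t z z + (\<Sum>y\<in>A. e y * zeta t z y)) +
        (\<Sum>x\<in>A. e x * (e z * zeta t x z + (\<Sum>y\<in>A. e y * zeta t x y)))"
      using insert by (simp add: sum.insert)
    also have "\<dots> = (zeta t z z - (\<Sum>y\<in>A. u y * zeta t z y)) +
        (\<Sum>x\<in>A. - u x * (zeta t x z - (\<Sum>y\<in>A. u y * zeta t x y)))"
    proof -
      have ez: "e z = 1" by (simp add: e_def)
      have a1: "(\<Sum>y\<in>A. e y * zeta t x y) = - (\<Sum>y\<in>A. u y * zeta t x y)" for x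
      proof -
        have "(\<Sum>y\<in>A. e y * zeta t x y) = (\<Sum>y\<in>A. - (u y * zeta t x y))"
          by (rule sum.cong) (simp_all add: eA)
        then show ?thesis by (simp add: sum_negf)
      qed
      have a2: "(\<Sum>x\<in>A. e x * (e z * zeta t x z + (\<Sum>y\<in>A. e y * zeta t x y))) =
          (\<Sum>x\<in>A. - u x * (zeta t x z - (\<Sum>y\<in>A. u y * zeta t x y)))"
      proof (rule sum.cong[OF refl])
        fix x assume x: "x \<in> A"
        show "e x * (e z * zeta t x z + (\<Sum>y\<in>A. e y * zeta t x y)) =
          - u x * (zeta t x z - (\<Sum>y\<in>A. u y * zeta t x y))"
          unfolding a1 ez eA[OF x] by simp
      qed
      show ?thesis by (subst a2) (simp add: a1 ez)
    qed
    also have "(\<Sum>x\<in>A. - u x * (zeta t x z - (\<Sum>y\<in>A. u y * zeta t x y))) = 0"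
      by (rule sum.neutral) (use u1 in \<open>simp add: mult.commute\<close>)
    finally show ?thesis by (simp add: \<delta>_def mult.commute)
  qed
  moreover have "Qf t (insert z A) e > 0"
    by (rule Qf_pos) (use insert assms(2) in \<open>auto simp: e_def\<close>)
  ultimately have \<delta>pos: "\<delta> > 0" by simp
  define \<alpha> where "\<alpha> = (r z - (\<Sum>y\<in>A. zeta t z y * p y)) / \<delta>"
  define w where "w x = (if x = z then \<alpha> else p x - \<alpha> * u x)" for x
  have wA: "w y = p y - \<alpha> * u y" if "y \<in> A" for y using that insert.hyps(2) by (auto simp: w_def)
  have "\<forall>x. x \<notin> insert z A \<longrightarrow> w x = 0" using u0 p0 by (simp add: w_def)
  moreover have "\<forall>x\<in>insert z A. (\<Sum>y\<in>insert z A. zeta t x y * w y) = r x"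
  proof
    fix x assume x: "x \<in> insert z A"
    have "(\<Sum>y\<in>insert z A. zeta t x y * w y) = zeta t x z * \<alpha> + (\<Sum>y\<in>A. zeta t x y * (p y - \<alpha> * u y))"
    proof -
      have "(\<Sum>y\<in>insert z A. zeta t x y * w y) = zeta t x z * w z + (\<Sum>y\<in>A. zeta t x y * w y)"
        using insert by simp
      moreover have "(\<Sum>y\<in>A. zeta t x y * w y) = (\<Sum>y\<in>A. zeta t x y * (p y - \<alpha> * u y))"
        by (rule sum.cong[OF refl]) (simp add: wA)
      moreover have "w z = \<alpha>" by (simp add: w_def)
      ultimately show ?thesis by simp
    qed
    also have "\<dots> = zeta t x z * \<alpha> + (\<Sum>y\<in>A. zeta t x y * p y) - \<alpha> * (\<Sum>y\<in>A. zeta t x y * u y)"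
      by (simp add: algebra_simps sum_subtractf sum_distrib_left)
    finally have eq: "(\<Sum>y\<in>insert z A. zeta t x y * w y) =
        zeta t x z * \<alpha> + (\<Sum>y\<in>A. zeta t x y * p y) - \<alpha> * (\<Sum>y\<in>A. zeta t x y * u y)" .
    show "(\<Sum>y\<in>insert z A. zeta t x y * w y) = r x"
    proof (cases "x = z")
      case True
      have "\<alpha> * \<delta> = r z - (\<Sum>y\<in>A. zeta t z y * p y)" using \<delta>pos by (simp add: \<alpha>_def)
      have "zeta t x z * \<alpha> + (\<Sum>y\<in>A. zeta t x y * p y) - \<alpha> * (\<Sum>y\<in>A. zeta t x y * u y)
          = \<alpha> * \<delta> + (\<Sum>y\<in>A. zeta t z y * p y)"
        unfolding True \<delta>_def by (simp add: algebra_simps)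
      also have "\<dots> = r x" using \<open>\<alpha> * \<delta> = r z - (\<Sum>y\<in>A. zeta t z y * p y)\<close> True by simp
      finally show ?thesis using eq by simp
    next
      case False
      then have "x \<in> A" using x by simp
      then show ?thesis unfolding eq using u1 p1 by simp
    qed
  qed
  ultimately show ?case by blast
qed

lemma is_wt_unique:
  assumes "finite A" "t > 0" "is_wt t A w1" "is_wt t A w2"
  shows "w1 = w2"
proof
  fix x
  define d where "d y = w1 y - w2 y" for y
  have "Qf t A d = (\<Sum>x\<in>A. d x * (\<Sum>y\<in>A. zeta t x y * d y))"
    by (simp add: Qf_def sum_distrib_left mult_ac)
  also have "\<dots> = (\<Sum>x\<in>A. d x * 0)"
  proof (rule sum.cong[OF refl])
    fix x assume x: "x \<in> A"
    have "(\<Sum>y\<in>A. zeta t x y * d y) = (\<Sum>y\<in>A. zeta t x y * w1 y) - (\<Sum>y\<in>A. zeta t x y * w2 y)"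
      by (simp add: d_def algebra_simps sum_subtractf)
    also have "\<dots> = 0" using assms(3,4) x by (simp add: is_wt_def)
    finally show "d x * (\<Sum>y\<in>A. zeta t x y * d y) = d x * 0" by simp
  qed
  finally have "Qf t A d = 0" by simp
  then have "\<forall>x\<in>A. d x = 0" using Qf_zero[OF assms(1,2)] by blast
  then show "w1 x = w2 x" using assms(3,4) by (cases "x \<in> A") (auto simp: is_wt_def d_def)
qed

lemma weighting_is_wt:
  assumes "finite A" "t > 0"
  shows "is_wt t A (weighting t A)"
proof -
  obtain w where "is_wt t A w"
    using solve_system[OF assms, of "\<lambda>_. 1"] by (auto simp: is_wt_def)
  then have "is_wt t A (THE w. is_wt t A w)"
    using theI[of "is_wt t A" w] is_wt_unique[OF assms] by blast
  then show ?thesis by (simp add: weighting_def is_wt_def[abs_def])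
qed

lemma weighting_eqI:
  assumes "finite A" "t > 0" "is_wt t A w"
  shows "weighting t A = w"
  using is_wt_unique[OF assms(1,2) weighting_is_wt[OF assms(1,2)] assms(3)] .

lemma variational:
  assumes "finite U" "t > 0"
  shows "2 * (\<Sum>x\<in>U. w x) - Qf t U w = magnitude t U - Qf t U (\<lambda>x. w x - weighting t U x)"
proof -
  define W where "W = weighting t U"
  have W: "is_wt t U W" using weighting_is_wt[OF assms] by (simp add: W_def)
  have r1: "(\<Sum>x\<in>U. \<Sum>y\<in>U. w x * W y * zeta t x y) = (\<Sum>x\<in>U. w x)"
  proof -
    have "(\<Sum>x\<in>U. \<Sum>y\<in>U. w x * W y * zeta t x y) = (\<Sum>x\<in>U. w x * (\<Sum>y\<in>U. zeta t x y * W y))"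
      by (simp add: sum_distrib_left mult_ac)
    also have "\<dots> = (\<Sum>x\<in>U. w x)" using W by (simp add: is_wt_def)
    finally show ?thesis .
  qed
  have r2: "(\<Sum>x\<in>U. \<Sum>y\<in>U. W x * w y * zeta t x y) = (\<Sum>x\<in>U. w x)"
  proof -
    have "(\<Sum>x\<in>U. \<Sum>y\<in>U. W x * w y * zeta t x y) = (\<Sum>y\<in>U. \<Sum>x\<in>U. w y * W x * zeta t y x)"
      by (subst sum.swap) (simp add: zeta_sym mult_ac)
    then show ?thesis using r1 by simp
  qed
  have r3: "Qf t U W = magnitude t U"
  proof -
    have "Qf t U W = (\<Sum>x\<in>U. W x * (\<Sum>y\<in>U. zeta t x y * W y))"
      by (simp add: Qf_def sum_distrib_left mult_ac)
    also have "\<dots> = (\<Sum>x\<in>U. W x)" using W by (simp add: is_wt_def)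
    finally show ?thesis by (simp add: magnitude_def W_def)
  qed
  have "Qf t U (\<lambda>x. w x - W x) = Qf t U w - (\<Sum>x\<in>U. \<Sum>y\<in>U. w x * W y * zeta t x y)
      - (\<Sum>x\<in>U. \<Sum>y\<in>U. W x * w y * zeta t x y) + Qf t U W"
    by (simp add: Qf_def algebra_simps sum_subtractf sum.distrib)
  then show ?thesis using r1 r2 r3 by (simp add: W_def)
qed

lemma mag_mono:
  assumes "finite U" "t > 0" "X \<subseteq> U"
  shows "magnitude t X = magnitude t U - Qf t U (\<lambda>x. weighting t X x - weighting t U x)"
proof -
  have fX: "finite X" using assms finite_subset by blast
  define W where "W = weighting t X"
  have W: "is_wt t X W" using weighting_is_wt[OF fX assms(2)] by (simp add: W_def)
  have s1: "(\<Sum>x\<in>U. W x) = (\<Sum>x\<in>X. W x)"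
    by (rule sum.mono_neutral_right[OF assms(1,3)]) (use W in \<open>auto simp: is_wt_def\<close>)
  have s2: "Qf t U W = Qf t X W"
  proof -
    have "Qf t U W = (\<Sum>x\<in>X. \<Sum>y\<in>U. W x * W y * zeta t x y)"
      unfolding Qf_def by (rule sum.mono_neutral_right[OF assms(1,3)]) (use W in \<open>auto simp: is_wt_def\<close>)
    also have "\<dots> = (\<Sum>x\<in>X. \<Sum>y\<in>X. W x * W y * zeta t x y)"
      by (intro sum.cong refl sum.mono_neutral_right[OF assms(1,3)]) (use W in \<open>auto simp: is_wt_def\<close>)
    finally show ?thesis by (simp add: Qf_def)
  qed
  have s3: "Qf t X W = (\<Sum>x\<in>X. W x)"
  proof -
    have "Qf t X W = (\<Sum>x\<in>X. W x * (\<Sum>y\<in>X. zeta t x y * W y))"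
      by (simp add: Qf_def sum_distrib_left mult_ac)
    also have "\<dots> = (\<Sum>x\<in>X. W x)" using W by (simp add: is_wt_def)
    finally show ?thesis .
  qed
  have "2 * (\<Sum>x\<in>U. W x) - Qf t U W = magnitude t X"
    using s1 s2 s3 by (simp add: magnitude_def W_def)
  then show ?thesis using variational[OF assms(1,2), of W] by (simp add: W_def)
qed

lemma mag_le:
  assumes "finite U" "t > 0" "X \<subseteq> U"
  shows "magnitude t X \<le> magnitude t U"
  using mag_mono[OF assms] Qf_nonneg[OF assms(1,2)] by smt

lemma mag_eq_iff:
  assumes "finite U" "t > 0" "X \<subseteq> U"
  shows "magnitude t X = magnitude t U \<longleftrightarrow> weighting t X = weighting t U"
proof
  assume "magnitude t X = magnitude t U"
  then have Q0: "Qf t U (\<lambda>x. weighting t X x - weighting t U x) = 0" using mag_mono[OF assms] by simp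
  show "weighting t X = weighting t U"
  proof
    fix x
    show "weighting t X x = weighting t U x"
    proof (cases "x \<in> U")
      case True
      then show ?thesis using Qf_zero[OF assms(1,2) Q0 True] by simp
    next
      case False
      have fX: "finite X" using assms finite_subset by blast
      then show ?thesis using False assms(3) weighting_is_wt[OF fX assms(2)] weighting_is_wt[OF assms(1,2)]
        by (auto simp: is_wt_def)
    qed
  qed
next
  assume "weighting t X = weighting t U"
  then show "magnitude t X = magnitude t U" using mag_mono[OF assms] by (simp add: Qf_def)
qed



lemma exp_ln_pow:
  assumes "t > 0"
  shows "exp (- t * (real k * (ln (10/9) / t))) = (9/10::real) ^ k"
proof -
  have "t * (real k * (ln (10/9) / t)) = real k * ln (10/9)" using assms by simp
  then have "exp (- t * (real k * (ln (10/9) / t))) = inverse (exp (real k * ln (10/9)))"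
    by (simp add: exp_minus)
  also have "exp (real k * ln (10/9)) = (10/9::real) ^ k"
    using powr_realpow[of "10/9::real" k] by (simp add: powr_def mult.commute)
  finally show ?thesis by (simp add: power_inverse[symmetric])
qed

lemma counterexample:
  fixes t :: real
  assumes t: "t > 0" and dim: "DIM('a::euclidean_space) > 1"
  shows "\<exists>X Y Z :: 'a set. finite X \<and> finite Y \<and> finite Z \<and>
               mag_dist t X Z > mag_dist t X Y + mag_dist t Y Z"
proof -
  obtain e1 e2 :: 'a where e: "e1 \<in> Basis" "e2 \<in> Basis" "e1 \<noteq> e2"
  proof -
    have "\<not> card (Basis::'a set) \<le> Suc 0" using dim by simp
    then show ?thesis using that card_le_Suc0_iff_eq[of "Basis::'a set"] by auto
  qed
  have i11: "e1 \<bullet> e1 = 1" and i22: "e2 \<bullet> e2 = 1" and i12: "e1 \<bullet> e2 = 0" and i21: "e2 \<bullet> e1 = 0"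
    using e by (auto simp: inner_Basis)
  define \<mu> where "\<mu> = ln (10/9) / t"
  have \<mu>0: "\<mu> > 0" using t by (simp add: \<mu>_def)
  define P where "P a b = a *\<^sub>R e1 + b *\<^sub>R e2" for a b
  have nP: "norm (P a b - P a' b') = sqrt ((a - a')\<^sup>2 + (b - b')\<^sup>2)" for a b a' b'
  proof -
    have "P a b - P a' b' = P (a - a') (b - b')" by (simp add: P_def algebra_simps)
    moreover have "(norm (P x y))\<^sup>2 = x\<^sup>2 + y\<^sup>2" for x y
    proof -
      have "(norm (P x y))\<^sup>2 = (P x y) \<bullet> (P x y)" by (rule power2_norm_eq_inner)
      also have "\<dots> = x\<^sup>2 + y\<^sup>2"
        by (simp add: P_def inner_add_left inner_add_right i11 i22 i12 i21 power2_eq_square)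
      finally show ?thesis .
    qed
    ultimately show ?thesis by (metis norm_ge_zero real_sqrt_unique)
  qed
  have zP: "zeta t (P a b) (P a' b') = exp (- t * sqrt ((a - a')\<^sup>2 + (b - b')\<^sup>2))" for a b a' b'
    by (simp add: zeta_def nP)
  define c :: real where "c = 9/10"
  have zk: "exp (- t * (real k * \<mu>)) = c ^ k" for k
    unfolding \<mu>_def c_def by (rule exp_ln_pow[OF t])
  have sq: "sqrt ((real k * \<mu>)\<^sup>2) = real k * \<mu>" for k using \<mu>0 by simp
  define p0 where "p0 = P (3 * \<mu>) 0"
  define p1 where "p1 = P (- 3 * \<mu>) 0"
  define p2 where "p2 = P 0 (4 * \<mu>)"
  define p3 where "p3 = P 0 (- 4 * \<mu>)"
  have d6: "zeta t p0 p1 = c ^ 6" "zeta t p1 p0 = c ^ 6"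
  proof -
    have "sqrt ((3 * \<mu> - - 3 * \<mu>)\<^sup>2 + (0 - 0)\<^sup>2) = real 6 * \<mu>"
      using sq[of 6] by (simp add: algebra_simps)
    then show "zeta t p0 p1 = c ^ 6" unfolding p0_def p1_def zP using zk[of 6] by simp
    then show "zeta t p1 p0 = c ^ 6" by (simp add: zeta_sym)
  qed
  have d8: "zeta t p2 p3 = c ^ 8" "zeta t p3 p2 = c ^ 8"
  proof -
    have "sqrt ((0 - 0)\<^sup>2 + (4 * \<mu> - - 4 * \<mu>)\<^sup>2) = real 8 * \<mu>"
      using sq[of 8] by (simp add: algebra_simps)
    then show "zeta t p2 p3 = c ^ 8" unfolding p2_def p3_def zP using zk[of 8] by simp
    then show "zeta t p3 p2 = c ^ 8" by (simp add: zeta_sym)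
  qed
  have s5: "sqrt ((3 * \<mu>)\<^sup>2 + (4 * \<mu>)\<^sup>2) = real 5 * \<mu>"
    using sq[of 5] by (simp add: algebra_simps power2_eq_square)
  have d5: "zeta t p0 p2 = c ^ 5" "zeta t p0 p3 = c ^ 5" "zeta t p1 p2 = c ^ 5" "zeta t p1 p3 = c ^ 5"
    "zeta t p2 p0 = c ^ 5" "zeta t p3 p0 = c ^ 5" "zeta t p2 p1 = c ^ 5" "zeta t p3 p1 = c ^ 5"
  proof -
    have a: "zeta t p0 p2 = c ^ 5" unfolding p0_def p2_def zP using zk[of 5] s5 by simp
    have b: "zeta t p0 p3 = c ^ 5" unfolding p0_def p3_def zP using zk[of 5] s5 by (simp add: power2_eq_square)
    have c': "zeta t p1 p2 = c ^ 5" unfolding p1_def p2_def zP using zk[of 5] s5 by (simp add: power2_eq_square)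
    have d: "zeta t p1 p3 = c ^ 5" unfolding p1_def p3_def zP using zk[of 5] s5 by (simp add: power2_eq_square)
    show "zeta t p0 p2 = c ^ 5" "zeta t p0 p3 = c ^ 5" "zeta t p1 p2 = c ^ 5" "zeta t p1 p3 = c ^ 5"
      "zeta t p2 p0 = c ^ 5" "zeta t p3 p0 = c ^ 5" "zeta t p2 p1 = c ^ 5" "zeta t p3 p1 = c ^ 5"
      using a b c' d by (simp_all add: zeta_sym)
  qed
  have dd: "zeta t p0 p0 = 1" "zeta t p1 p1 = 1" "zeta t p2 p2 = 1" "zeta t p3 p3 = 1"
    by (simp_all add: zeta_self)
  have neq: "p0 \<noteq> p1" "p0 \<noteq> p2" "p0 \<noteq> p3" "p1 \<noteq> p2" "p1 \<noteq> p3" "p2 \<noteq> p3"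
    using d5 d6 d8 dd by (auto simp: c_def power_divide)
  note zt = d5 d6 d8 dd
  have neq': "p1 \<noteq> p0" "p2 \<noteq> p0" "p3 \<noteq> p0" "p2 \<noteq> p1" "p3 \<noteq> p1" "p3 \<noteq> p2"
    using neq by auto
  define R where "R = {p0, p1, p2, p3}"
  define T2 where "T2 = {p0, p1, p2}"
  define T3 where "T3 = {p0, p1, p3}"
  define Y where "Y = {p0, p1}"
  define X where "X = {p2}"
  have fin: "finite R" "finite T2" "finite T3" "finite Y" "finite X"
    by (simp_all add: R_def T2_def T3_def Y_def X_def)
  have mX: "magnitude t X = 1"
  proof -
    have "is_wt t X (\<lambda>x. if x = p2 then 1 else 0)"
      by (simp add: is_wt_def X_def zt)
    then show ?thesis using weighting_eqI[OF fin(5) t] by (simp add: magnitude_def X_def)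
  qed
  have mY: "magnitude t Y = 2 / (1 + c ^ 6)"
  proof -
    define w where "w x = (if x = p0 \<or> x = p1 then 1 / (1 + c ^ 6) else 0)" for x
    have "is_wt t Y w"
      unfolding is_wt_def Y_def w_def using neq neq' by (simp add: zt c_def power_divide)
    then have "weighting t Y = w" using weighting_eqI[OF fin(4) t] by simp
    then show ?thesis using neq neq' by (simp add: magnitude_def Y_def w_def)
  qed
  define \<alpha> where "\<alpha> = (1 - c ^ 5) / (1 + c ^ 6 - 2 * c ^ 10)"
  define \<beta> where "\<beta> = 1 - 2 * \<alpha> * c ^ 5"
  have mT2: "magnitude t T2 = 2 * \<alpha> + \<beta>"
  proof -
    define w where "w x = (if x = p0 \<or> x = p1 then \<alpha> else if x = p2 then \<beta> else 0)" for x
    have "is_wt t T2 w"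
      unfolding is_wt_def T2_def w_def using neq neq' by (simp add: zt c_def power_divide \<alpha>_def \<beta>_def)
    then have "weighting t T2 = w" using weighting_eqI[OF fin(2) t] by simp
    then show ?thesis using neq neq' by (simp add: magnitude_def T2_def w_def)
  qed
  have mT3: "magnitude t T3 = 2 * \<alpha> + \<beta>"
  proof -
    define w where "w x = (if x = p0 \<or> x = p1 then \<alpha> else if x = p3 then \<beta> else 0)" for x
    have "is_wt t T3 w"
      unfolding is_wt_def T3_def w_def using neq neq' by (simp add: zt c_def power_divide \<alpha>_def \<beta>_def)
    then have "weighting t T3 = w" using weighting_eqI[OF fin(3) t] by simp
    then show ?thesis using neq neq' by (simp add: magnitude_def T3_def w_def)
  qed
  define \<delta> where "\<delta> = (1 + c ^ 6) * (1 + c ^ 8) - 4 * c ^ 10"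
  define \<alpha>' where "\<alpha>' = (1 + c ^ 8 - 2 * c ^ 5) / \<delta>"
  define \<beta>' where "\<beta>' = (1 + c ^ 6 - 2 * c ^ 5) / \<delta>"
  have mR: "magnitude t R = 2 * \<alpha>' + 2 * \<beta>'"
  proof -
    define w where "w x = (if x = p0 \<or> x = p1 then \<alpha>' else if x = p2 \<or> x = p3 then \<beta>' else 0)" for x
    have "is_wt t R w"
      unfolding is_wt_def R_def w_def using neq neq' by (simp add: zt c_def power_divide \<alpha>'_def \<beta>'_def \<delta>_def)
    then have "weighting t R = w" using weighting_eqI[OF fin(1) t] by simp
    then show ?thesis using neq neq' by (simp add: magnitude_def R_def w_def)
  qed
  have u1: "X \<union> T3 = R" "X \<union> Y = T2" "Y \<union> T3 = T3"
    by (auto simp: X_def T3_def R_def Y_def T2_def)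
  have "mag_dist t X T3 > mag_dist t X Y + mag_dist t Y T3"
    unfolding mag_dist_def u1 mX mY mT2 mT3 mR
    by (simp add: \<alpha>_def \<beta>_def \<alpha>'_def \<beta>'_def \<delta>_def c_def power_divide)
  then show ?thesis using fin by blast
qed



lemma sum_supp:
  assumes "finite B" "A \<subseteq> B" "\<forall>x. x \<notin> A \<longrightarrow> w x = 0"
  shows "(\<Sum>y\<in>B. zeta t x y * w y) = (\<Sum>y\<in>A. zeta t x y * w y)"
  by (rule sum.mono_neutral_right[OF assms(1,2)]) (use assms(3) in auto)

lemma mag_dist_nonneg:
  assumes "finite X" "finite Y" "t > 0"
  shows "mag_dist t X Y \<ge> 0"
proof -
  have "magnitude t X \<le> magnitude t (X \<union> Y)" "magnitude t Y \<le> magnitude t (X \<union> Y)"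
    using mag_le[of "X \<union> Y" t X] mag_le[of "X \<union> Y" t Y] assms by auto
  then show ?thesis by (simp add: mag_dist_def)
qed

lemma mag_dist_zero:
  assumes X: "finite X" and Y: "finite Y" and t: "t > 0"
  shows "mag_dist t X Y = 0 \<longleftrightarrow> mag_equivalent t X Y"
proof -
  define U where "U = X \<union> Y"
  have U: "finite U" using X Y by (simp add: U_def)
  have XU: "X \<subseteq> U" and YU: "Y \<subseteq> U" by (auto simp: U_def)
  have leX: "magnitude t X \<le> magnitude t U" using mag_le[OF U t XU] .
  have leY: "magnitude t Y \<le> magnitude t U" using mag_le[OF U t YU] .
  have wX: "is_wt t X (weighting t X)" using weighting_is_wt[OF X t] .
  have wY: "is_wt t Y (weighting t Y)" using weighting_is_wt[OF Y t] .
  have "mag_dist t X Y = 0 \<longleftrightarrow> magnitude t X = magnitude t U \<and> magnitude t Y = magnitude t U"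
    using leX leY by (auto simp: mag_dist_def U_def)
  also have "\<dots> \<longleftrightarrow> weighting t X = weighting t U \<and> weighting t Y = weighting t U"
    using mag_eq_iff[OF U t XU] mag_eq_iff[OF U t YU] by simp
  also have "\<dots> \<longleftrightarrow> mag_equivalent t X Y"
  proof
    assume h: "weighting t X = weighting t U \<and> weighting t Y = weighting t U"
    then have eq: "weighting t X = weighting t Y" by simp
    have "{x \<in> X. weighting t X x \<noteq> 0} = {x. weighting t X x \<noteq> 0}"
      using wX by (auto simp: is_wt_def)
    moreover have "{y \<in> Y. weighting t Y y \<noteq> 0} = {x. weighting t Y x \<noteq> 0}"
      using wY by (auto simp: is_wt_def)
    ultimately show "mag_equivalent t X Y" unfolding mag_equivalent_def using eq by simp
  next
    assume "mag_equivalent t X Y"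
    then have S: "{x \<in> X. weighting t X x \<noteq> 0} = {y \<in> Y. weighting t Y y \<noteq> 0}"
      by (simp add: mag_equivalent_def)
    define S where "S = {x \<in> X. weighting t X x \<noteq> 0}"
    have SX: "S \<subseteq> X" and SY: "S \<subseteq> Y" using S by (auto simp: S_def)
    have fS: "finite S" using X SX finite_subset by blast
    have zX: "\<forall>x. x \<notin> S \<longrightarrow> weighting t X x = 0" using wX by (auto simp: S_def is_wt_def)
    have zY: "\<forall>x. x \<notin> S \<longrightarrow> weighting t Y x = 0" using wY S by (auto simp: S_def is_wt_def)
    have sX: "is_wt t S (weighting t X)"
      unfolding is_wt_def using zX wX SX sum_supp[OF X SX zX] by (auto simp: is_wt_def)
    have sY: "is_wt t S (weighting t Y)"
      unfolding is_wt_def using zY wY SY sum_supp[OF Y SY zY] by (auto simp: is_wt_def)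
    have eq: "weighting t X = weighting t Y" using is_wt_unique[OF fS t sX sY] .
    have SU: "S \<subseteq> U" using SX XU by auto
    have "is_wt t U (weighting t X)"
      unfolding is_wt_def
    proof (intro conjI allI impI ballI)
      fix x assume "x \<notin> U" then show "weighting t X x = 0" using zX SU by auto
    next
      fix x assume x: "x \<in> U"
      have "(\<Sum>y\<in>U. zeta t x y * weighting t X y) = (\<Sum>y\<in>S. zeta t x y * weighting t X y)"
        by (rule sum_supp[OF U SU zX])
      show "(\<Sum>y\<in>U. zeta t x y * weighting t X y) = 1"
      proof (cases "x \<in> X")
        case True
        then show ?thesis using wX sum_supp[OF U XU, of "weighting t X"] by (auto simp: is_wt_def)
      next
        case False
        then have "x \<in> Y" using x by (auto simp: U_def)
        then show ?thesis using wY sum_supp[OF U YU, of "weighting t Y"] eq by (auto simp: is_wt_def)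
      qed
    qed
    then have "weighting t U = weighting t X" by (rule weighting_eqI[OF U t])
    then show "weighting t X = weighting t U \<and> weighting t Y = weighting t U" using eq by simp
  qed
  finally show ?thesis .
qed

theorem theorem5p2:
  fixes t :: real
  assumes "t > 0"
  shows "(\<forall>X Y :: 'a::euclidean_space set. finite X \<longrightarrow> finite Y \<longrightarrow>
            mag_dist t X Y = mag_dist t Y X)
       \<and> (\<forall>X Y :: 'a set. finite X \<longrightarrow> finite Y \<longrightarrow> mag_dist t X Y \<ge> 0)
       \<and> (\<forall>X Y :: 'a set. finite X \<longrightarrow> finite Y \<longrightarrow>
            (mag_dist t X Y = 0 \<longleftrightarrow> mag_equivalent t X Y))
       \<and> (DIM('a) > 1 \<longrightarrow>
            (\<exists>X Y Z :: 'a set. finite X \<and> finite Y \<and> finite Z \<and>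
               mag_dist t X Z > mag_dist t X Y + mag_dist t Y Z))"
proof (intro conjI allI impI)
  fix X Y :: "'a set"
  show "mag_dist t X Y = mag_dist t Y X" by (simp add: mag_dist_def Un_commute)
next
  fix X Y :: "'a set"
  assume "finite X" "finite Y"
  then show "mag_dist t X Y \<ge> 0" using mag_dist_nonneg assms by blast
next
  fix X Y :: "'a set"
  assume "finite X" "finite Y"
  then show "mag_dist t X Y = 0 \<longleftrightarrow> mag_equivalent t X Y" using mag_dist_zero assms by blast
next
  assume "DIM('a) > 1"
  then show "\<exists>X Y Z :: 'a set. finite X \<and> finite Y \<and> finite Z \<and>
               mag_dist t X Z > mag_dist t X Y + mag_dist t Y Z"
    using counterexample assms by blast
qed


end
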